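(* If $A$ is a bounded self-adjoint operator on $L^2(\mu)$, then $\|LA-AL\|=\|KA-AK\|$. In particular, if $\psi\in L^2(\mu)$ has $|\psi|=1$ and $\hat\psi$ is the projection $\phi\mapsto\langle\phi,\psi\rangle\psi$, then $\|L\hat\psi-\hat\psi L\|=\|K\hat\psi-\hat\psi K\|$, and $$\big\|[\mathcal D,\pi(\hat\psi)]\big\|=\max\{\|K\hat\psi-\hat\psi K\|,\|L\hat\psi-\hat\psi L\|\}=\|K\hat\psi-\hat\psi K\|.$$
   Context: $\Omega=\{0,1\}^{\mathbb N}$ with the shift $\sigma$; for $a\in\{0,1\}$, $ax=(a,x_1,x_2,\dots)$. $\mu$ is the measure of maximal entropy of $\sigma$ (uniform Bernoulli product measure). $L^2(\mu)$ has inner product $\langle\cdot,\cdot\rangle$ and norm $|\cdot|$. Ruelle operator: $L\phi(x)=\frac12(\phi(0x)+\phi(1x))$; Koopman operator: $K\phi=\phi\circ\sigma$; $K$ is the adjoint of $L$. On $\mathcal H=L^2(\mu)\times L^2(\mu)$ (norm $|(\phi_1,\phi_2)|^2=|\phi_1|^2+|\phi_2|^2$) let $\mathcal D=\begin{pmatrix}0&K\\ L&0\end{pmatrix}$ and, for bounded $A$ on $L^2(\mu)$, $\pi(A)=\begin{pmatrix}A&0\\0&A\end{pmatrix}$, so $[\mathcal D,\pi(A)]=\begin{pmatrix}0&KA-AK\\ LA-AL&0\end{pmatrix}$. $\|\cdot\|$ is the operator norm. *)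

theory Defs
  imports "HOL-Probability.Probability"
begin

text \<open>Omega = {0,1}^N is modelled as nat => bool (False = 0, True = 1, index 0 = first
coordinate). L^2(mu) (complex) is modelled by representatives: square-integrable
measurable functions; operators act on representatives and are linear up to mu-a.e.
equality.\<close>

type_synonym fn = "(nat \<Rightarrow> bool) \<Rightarrow> complex"

definition mu :: "(nat \<Rightarrow> bool) measure" where
  "mu = PiM UNIV (\<lambda>_::nat. measure_pmf (bernoulli_pmf (1/2)))"

definition L2 :: "fn set" where
  "L2 = {f. f \<in> borel_measurable mu \<and> integrable mu (\<lambda>x. (cmod (f x))^2)}"

definition inner2 :: "fn \<Rightarrow> fn \<Rightarrow> complex" where
  "inner2 f g = (LINT x|mu. f x * cnj (g x))"

definition norm2 :: "fn \<Rightarrow> real" where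
  "norm2 f = sqrt (LINT x|mu. (cmod (f x))^2)"

definition shift :: "(nat \<Rightarrow> bool) \<Rightarrow> (nat \<Rightarrow> bool)" where
  "shift x = (\<lambda>n. x (Suc n))"

definition prep :: "bool \<Rightarrow> (nat \<Rightarrow> bool) \<Rightarrow> (nat \<Rightarrow> bool)" where
  "prep a x = case_nat a x"

definition ruelle :: "fn \<Rightarrow> fn" where
  "ruelle \<phi> = (\<lambda>x. (\<phi> (prep False x) + \<phi> (prep True x)) / 2)"

definition koopman :: "fn \<Rightarrow> fn" where
  "koopman \<phi> = (\<lambda>x. \<phi> (shift x))"

definition bounded_op :: "(fn \<Rightarrow> fn) \<Rightarrow> bool" where
  "bounded_op A \<longleftrightarrow>
     (\<forall>f\<in>L2. A f \<in> L2) \<and>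
     (\<forall>f\<in>L2. \<forall>g\<in>L2. AE x in mu. A (\<lambda>y. f y + g y) x = A f x + A g x) \<and>
     (\<forall>f\<in>L2. \<forall>c. AE x in mu. A (\<lambda>y. c * f y) x = c * A f x) \<and>
     (\<exists>C. \<forall>f\<in>L2. norm2 (A f) \<le> C * norm2 f)"

definition self_adjoint :: "(fn \<Rightarrow> fn) \<Rightarrow> bool" where
  "self_adjoint A \<longleftrightarrow> (\<forall>f\<in>L2. \<forall>g\<in>L2. inner2 (A f) g = inner2 f (A g))"

definition opnorm :: "(fn \<Rightarrow> fn) \<Rightarrow> real" where
  "opnorm T = Sup {norm2 (T f) | f. f \<in> L2 \<and> norm2 f \<le> 1}"

definition comm :: "(fn \<Rightarrow> fn) \<Rightarrow> (fn \<Rightarrow> fn) \<Rightarrow> (fn \<Rightarrow> fn)" where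
  "comm T A = (\<lambda>f x. T (A f) x - A (T f) x)"

definition proj :: "fn \<Rightarrow> (fn \<Rightarrow> fn)" where
  "proj \<psi> = (\<lambda>f x. inner2 f \<psi> * \<psi> x)"

definition normH :: "fn \<times> fn \<Rightarrow> real" where
  "normH p = sqrt ((norm2 (fst p))^2 + (norm2 (snd p))^2)"

definition opnormH :: "(fn \<times> fn \<Rightarrow> fn \<times> fn) \<Rightarrow> real" where
  "opnormH S = Sup {normH (S p) | p. fst p \<in> L2 \<and> snd p \<in> L2 \<and> normH p \<le> 1}"

definition dirac :: "fn \<times> fn \<Rightarrow> fn \<times> fn" where
  "dirac p = (koopman (snd p), ruelle (fst p))"

definition piop :: "(fn \<Rightarrow> fn) \<Rightarrow> fn \<times> fn \<Rightarrow> fn \<times> fn" where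
  "piop A p = (A (fst p), A (snd p))"

definition commH :: "(fn \<times> fn \<Rightarrow> fn \<times> fn) \<Rightarrow> (fn \<times> fn \<Rightarrow> fn \<times> fn) \<Rightarrow> (fn \<times> fn \<Rightarrow> fn \<times> fn)" where
  "commH S P = (\<lambda>p. ((\<lambda>x. fst (S (P p)) x - fst (P (S p)) x),
                      (\<lambda>x. snd (S (P p)) x - snd (P (S p)) x)))"

end

theory Submission
  imports Defs
begin


abbreviation "BB \<equiv> measure_pmf (bernoulli_pmf (1/2))"

lemma space_mu: "space mu = UNIV"
  by (simp add: mu_def space_PiM)

lemma sets_mu: "sets mu = sets (PiM UNIV (\<lambda>_::nat. BB))"
  by (simp add: mu_def)

lemma mu_iter: "distr (BB \<Otimes>\<^sub>M mu) mu (\<lambda>(s, \<omega>). case_nat s \<omega>) = mu"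
proof -
  interpret S: sequence_space BB by unfold_locales
  show ?thesis unfolding mu_def by (rule S.PiM_iter)
qed

lemma prob_mu: "prob_space mu"
proof -
  interpret S: sequence_space BB by unfold_locales
  show ?thesis unfolding mu_def by (rule S.P.prob_space_axioms)
qed

lemma prep_meas[measurable]: "prep a \<in> measurable mu mu"
  unfolding prep_def mu_def by measurable

lemma shift_meas[measurable]: "shift \<in> measurable mu mu"
  unfolding shift_def mu_def by (rule measurable_PiM_single') (auto simp: space_PiM)

lemma iter_meas[measurable]: "(\<lambda>(s, \<omega>). case_nat s \<omega>) \<in> measurable (BB \<Otimes>\<^sub>M mu) mu"
  unfolding mu_def by measurable

lemma nn_avg:
  assumes f[measurable]: "f \<in> borel_measurable mu"
  shows "(\<integral>\<^sup>+y. f y \<partial>mu) = (\<integral>\<^sup>+x. ennreal (1/2) * f (prep False x) + ennreal (1/2) * f (prep True x) \<partial>mu)"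
proof -
  interpret P: pair_sigma_finite BB mu
    using prob_mu by (simp add: pair_sigma_finite_def prob_space_imp_sigma_finite prob_space_measure_pmf)
  have "(\<integral>\<^sup>+y. f y \<partial>mu) = (\<integral>\<^sup>+y. f y \<partial>distr (BB \<Otimes>\<^sub>M mu) mu (\<lambda>(s, \<omega>). case_nat s \<omega>))"
    by (simp add: mu_iter)
  also have "\<dots> = (\<integral>\<^sup>+p. f (case_nat (fst p) (snd p)) \<partial>(BB \<Otimes>\<^sub>M mu))"
    by (subst nn_integral_distr) (auto simp: split_beta')
  also have "\<dots> = (\<integral>\<^sup>+x. \<integral>\<^sup>+s. f (case_nat s x) \<partial>BB \<partial>mu)"
    by (subst P.nn_integral_snd[symmetric]) (auto simp: split_beta')
  also have "\<dots> = (\<integral>\<^sup>+x. ennreal (1/2) * f (prep False x) + ennreal (1/2) * f (prep True x) \<partial>mu)"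
    by (intro nn_integral_cong)
       (simp add: nn_integral_measure_pmf nn_integral_count_space_finite UNIV_bool prep_def)
  finally show ?thesis .
qed

lemma pair_BB_mu: "pair_sigma_finite BB mu"
  using prob_mu by (simp add: pair_sigma_finite_def prob_space_imp_sigma_finite prob_space_measure_pmf)

lemma int_prep:
  fixes f :: "_ \<Rightarrow> 'b::{banach, second_countable_topology}"
  assumes f: "integrable mu f"
  shows "integrable mu (\<lambda>x. f (prep a x))"
proof -
  have fm[measurable]: "f \<in> borel_measurable mu" using f by auto
  have "(\<integral>\<^sup>+x. ennreal (norm (f x)) \<partial>mu) < \<infinity>" using f by (simp add: integrable_iff_bounded)
  moreover have "(\<integral>\<^sup>+x. ennreal (norm (f x)) \<partial>mu) =
     (\<integral>\<^sup>+x. ennreal (1/2) * ennreal (norm (f (prep False x))) + ennreal (1/2) * ennreal (norm (f (prep True x))) \<partial>mu)"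
    by (rule nn_avg) measurable
  moreover have "(\<integral>\<^sup>+x. ennreal (1/2) * ennreal (norm (f (prep a x))) \<partial>mu) \<le>
     (\<integral>\<^sup>+x. ennreal (1/2) * ennreal (norm (f (prep False x))) + ennreal (1/2) * ennreal (norm (f (prep True x))) \<partial>mu)"
    by (intro nn_integral_mono) (cases a, auto)
  moreover have "(\<integral>\<^sup>+x. ennreal (1/2) * ennreal (norm (f (prep a x))) \<partial>mu) =
     ennreal (1/2) * (\<integral>\<^sup>+x. ennreal (norm (f (prep a x))) \<partial>mu)"
    by (rule nn_integral_cmult) measurable
  ultimately have "ennreal (1/2) * (\<integral>\<^sup>+x. ennreal (norm (f (prep a x))) \<partial>mu) < \<infinity>"
    by simp
  then have "(\<integral>\<^sup>+x. ennreal (norm (f (prep a x))) \<partial>mu) < \<infinity>"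
    by (auto simp add: ennreal_mult_less_top top.not_eq_extremum)
  then show ?thesis by (simp add: integrable_iff_bounded)
qed

lemma int_avg:
  fixes f :: "_ \<Rightarrow> 'b::{banach, second_countable_topology}"
  assumes f: "integrable mu f"
  shows "integral\<^sup>L mu f = (1/2) *\<^sub>R integral\<^sup>L mu (\<lambda>x. f (prep False x)) + (1/2) *\<^sub>R integral\<^sup>L mu (\<lambda>x. f (prep True x))"
proof -
  interpret P: pair_sigma_finite BB mu by (rule pair_BB_mu)
  have fm[measurable]: "f \<in> borel_measurable mu" using f by auto
  have i2: "integrable (BB \<Otimes>\<^sub>M mu) (case_prod (\<lambda>s x. f (case_nat s x)))"
    using f integrable_distr_eq[OF iter_meas fm] mu_iter by (simp add: split_beta')
  have "integral\<^sup>L mu f = integral\<^sup>L (distr (BB \<Otimes>\<^sub>M mu) mu (\<lambda>(s, \<omega>). case_nat s \<omega>)) f"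
    by (simp add: mu_iter)
  also have "\<dots> = integral\<^sup>L (BB \<Otimes>\<^sub>M mu) (case_prod (\<lambda>s x. f (case_nat s x)))"
    by (subst integral_distr) (auto simp: split_beta')
  also have "\<dots> = (\<integral>x. (\<integral>s. f (case_nat s x) \<partial>BB) \<partial>mu)"
    by (rule P.integral_snd[symmetric, OF i2])
  also have "\<dots> = (\<integral>x. (1/2) *\<^sub>R f (prep False x) + (1/2) *\<^sub>R f (prep True x) \<partial>mu)"
    by (intro Bochner_Integration.integral_cong refl)
       (simp add: integral_measure_pmf[where A=UNIV] UNIV_bool prep_def)
  also have "\<dots> = (1/2) *\<^sub>R integral\<^sup>L mu (\<lambda>x. f (prep False x)) + (1/2) *\<^sub>R integral\<^sup>L mu (\<lambda>x. f (prep True x))"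
    using int_prep[OF f] by simp
  finally show ?thesis .
qed

lemma amgm_real: "(a::real) \<ge> 0 \<Longrightarrow> b \<ge> 0 \<Longrightarrow> a*b \<le> a^2 + b^2"
proof -
  assume a: "a \<ge> 0" and b: "b \<ge> 0"
  have "0 \<le> (a-b)^2" by simp
  hence "2*a*b \<le> a^2+b^2" by (simp add: power2_diff)
  moreover have "0 \<le> a*b" using a b by simp
  ultimately show ?thesis by linarith
qed

lemma sq2_real: "((a::real)+b)^2 \<le> 2*a^2 + 2*b^2"
proof -
  have "0 \<le> (a-b)^2" by simp
  hence "2*a*b \<le> a^2+b^2" by (simp add: power2_diff)
  then show ?thesis by (simp add: power2_sum)
qed

lemma meas_cnj[measurable]:
  "f \<in> borel_measurable M \<Longrightarrow> (\<lambda>x. cnj (f x :: complex)) \<in> borel_measurable M"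
  by (rule borel_measurable_continuous_on[where f=cnj]) (auto intro: continuous_intros)

lemma L2_meas: "f \<in> L2 \<Longrightarrow> f \<in> borel_measurable mu"
  by (simp add: L2_def)

lemma L2_int: "f \<in> L2 \<Longrightarrow> integrable mu (\<lambda>x. (cmod (f x))^2)"
  by (simp add: L2_def)

lemma L2_zero: "(\<lambda>x. 0) \<in> L2"
  by (simp add: L2_def)

lemma norm2_zero: "norm2 (\<lambda>x. 0) = 0"
  by (simp add: norm2_def)

lemma norm2_nonneg: "norm2 f \<ge> 0"
  unfolding norm2_def by (rule real_sqrt_ge_zero, rule Bochner_Integration.integral_nonneg) simp

lemma norm2_sq: "(norm2 f)^2 = (LINT x|mu. (cmod (f x))^2)"
proof -
  have "(LINT x|mu. (cmod (f x))^2) \<ge> 0" by (rule Bochner_Integration.integral_nonneg) simp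
  then show ?thesis by (simp add: norm2_def)
qed

lemma L2_prod_int:
  assumes "f \<in> L2" "g \<in> L2"
  shows "integrable mu (\<lambda>x. f x * cnj (g x))"
proof (rule Bochner_Integration.integrable_bound)
  show "integrable mu (\<lambda>x. (cmod (f x))^2 + (cmod (g x))^2)"
    using assms by (simp add: L2_int)
  have [measurable]: "f \<in> borel_measurable mu" "g \<in> borel_measurable mu" using assms by (auto simp: L2_meas)
  show "(\<lambda>x. f x * cnj (g x)) \<in> borel_measurable mu" by measurable
  show "AE x in mu. norm (f x * cnj (g x)) \<le> norm ((cmod (f x))^2 + (cmod (g x))^2)"
  proof (rule AE_I2)
    fix x
    have "cmod (f x) * cmod (g x) \<le> (cmod (f x))^2 + (cmod (g x))^2"
      by (rule amgm_real) auto
    then show "norm (f x * cnj (g x)) \<le> norm ((cmod (f x))^2 + (cmod (g x))^2)"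
      by (simp add: norm_mult)
  qed
qed

lemma L2_diff:
  assumes "f \<in> L2" "g \<in> L2"
  shows "(\<lambda>x. f x - g x) \<in> L2"
  unfolding L2_def
proof (intro CollectI conjI)
  have [measurable]: "f \<in> borel_measurable mu" "g \<in> borel_measurable mu" using assms by (auto simp: L2_meas)
  show "(\<lambda>x. f x - g x) \<in> borel_measurable mu" by measurable
  show "integrable mu (\<lambda>x. (cmod (f x - g x))^2)"
  proof (rule Bochner_Integration.integrable_bound)
    show "integrable mu (\<lambda>x. 2 * (cmod (f x))^2 + 2 * (cmod (g x))^2)"
      using assms by (simp add: L2_int)
    show "(\<lambda>x. (cmod (f x - g x))^2) \<in> borel_measurable mu" by measurable
    show "AE x in mu. norm ((cmod (f x - g x))^2) \<le> norm (2 * (cmod (f x))^2 + 2 * (cmod (g x))^2)"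
    proof (rule AE_I2)
      fix x
      have t: "cmod (f x - g x) \<le> cmod (f x) + cmod (g x)" by (rule norm_triangle_ineq4)
      have "(cmod (f x - g x))^2 \<le> (cmod (f x) + cmod (g x))^2"
        using t by (intro power_mono) auto
      also have "\<dots> \<le> 2 * (cmod (f x))^2 + 2 * (cmod (g x))^2"
        by (rule sq2_real)
      finally show "norm ((cmod (f x - g x))^2) \<le> norm (2 * (cmod (f x))^2 + 2 * (cmod (g x))^2)"
        by simp
    qed
  qed
qed

lemma norm2_diff_sq:
  assumes "f \<in> L2" "g \<in> L2"
  shows "(norm2 (\<lambda>x. f x - g x))^2 \<le> 2 * (norm2 f)^2 + 2 * (norm2 g)^2"
proof -
  have "(norm2 (\<lambda>x. f x - g x))^2 = (LINT x|mu. (cmod (f x - g x))^2)" by (rule norm2_sq)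
  also have "\<dots> \<le> (LINT x|mu. 2 * (cmod (f x))^2 + 2 * (cmod (g x))^2)"
  proof (rule Bochner_Integration.integral_mono)
    show "integrable mu (\<lambda>x. (cmod (f x - g x))^2)" using L2_diff[OF assms] by (simp add: L2_int)
    show "integrable mu (\<lambda>x. 2 * (cmod (f x))^2 + 2 * (cmod (g x))^2)" using assms by (simp add: L2_int)
    fix x
    have t: "cmod (f x - g x) \<le> cmod (f x) + cmod (g x)" by (rule norm_triangle_ineq4)
    have "(cmod (f x - g x))^2 \<le> (cmod (f x) + cmod (g x))^2"
      using t by (intro power_mono) auto
    also have "\<dots> \<le> 2 * (cmod (f x))^2 + 2 * (cmod (g x))^2"
      by (rule sq2_real)
    finally show "(cmod (f x - g x))^2 \<le> 2 * (cmod (f x))^2 + 2 * (cmod (g x))^2" .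
  qed
  also have "\<dots> = 2 * (norm2 f)^2 + 2 * (norm2 g)^2"
    using assms by (simp add: L2_int norm2_sq)
  finally show ?thesis .
qed

lemma L2_scale:
  assumes "f \<in> L2"
  shows "(\<lambda>x. c * f x) \<in> L2" and "norm2 (\<lambda>x. c * f x) = cmod c * norm2 f"
proof -
  have e: "(\<lambda>x. (cmod (c * f x))^2) = (\<lambda>x. (cmod c)^2 * (cmod (f x))^2)"
    by (simp add: norm_mult power_mult_distrib)
  have [measurable]: "f \<in> borel_measurable mu" using assms by (auto simp: L2_meas)
  have "integrable mu (\<lambda>x. (cmod c)^2 * (cmod (f x))^2)" using L2_int[OF assms] by simp
  then have "integrable mu (\<lambda>x. (cmod (c * f x))^2)" by (subst e)
  then show "(\<lambda>x. c * f x) \<in> L2" unfolding L2_def by auto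
  have "norm2 (\<lambda>x. c * f x) = sqrt ((cmod c)^2 * (LINT x|mu. (cmod (f x))^2))"
    unfolding norm2_def e by simp
  also have "\<dots> = cmod c * norm2 f" by (simp add: norm2_def real_sqrt_mult)
  finally show "norm2 (\<lambda>x. c * f x) = cmod c * norm2 f" .
qed



lemma inner2_cnj: "inner2 f g = cnj (inner2 g f)"
proof -
  have e: "(\<lambda>x. f x * cnj (g x)) = (\<lambda>x. cnj (g x * cnj (f x)))"
    by (rule ext) (simp add: mult.commute)
  show ?thesis unfolding inner2_def e by (rule Bochner_Integration.integral_cnj)
qed

lemma inner2_self: "inner2 f f = complex_of_real ((norm2 f)^2)"
proof -
  have "(\<lambda>x. f x * cnj (f x)) = (\<lambda>x. complex_of_real ((cmod (f x))^2))"
    by (rule ext) (rule complex_norm_square[symmetric])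
  then have "inner2 f f = (CLINT x|mu. complex_of_real ((cmod (f x))^2))" unfolding inner2_def by simp
  also have "\<dots> = complex_of_real (LINT x|mu. (cmod (f x))^2)"
    by (rule Bochner_Integration.integral_complex_of_real)
  also have "\<dots> = complex_of_real ((norm2 f)^2)" by (simp only: norm2_sq)
  finally show ?thesis .
qed

lemma inner2_diff_left:
  assumes "a \<in> L2" "b \<in> L2" "g \<in> L2"
  shows "inner2 (\<lambda>x. a x - b x) g = inner2 a g - inner2 b g"
proof -
  have e: "(\<lambda>x. (a x - b x) * cnj (g x)) = (\<lambda>x. a x * cnj (g x) - b x * cnj (g x))"
    by (rule ext) (simp add: left_diff_distrib)
  show ?thesis unfolding inner2_def e
    by (rule Bochner_Integration.integral_diff[OF L2_prod_int[OF assms(1,3)] L2_prod_int[OF assms(2,3)]])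
qed

lemma inner2_diff_right:
  assumes "a \<in> L2" "b \<in> L2" "g \<in> L2"
  shows "inner2 g (\<lambda>x. a x - b x) = inner2 g a - inner2 g b"
proof -
  have e: "(\<lambda>x. g x * cnj (a x - b x)) = (\<lambda>x. g x * cnj (a x) - g x * cnj (b x))"
    by (rule ext) (simp add: right_diff_distrib)
  show ?thesis unfolding inner2_def e
    by (rule Bochner_Integration.integral_diff[OF L2_prod_int[OF assms(3,1)] L2_prod_int[OF assms(3,2)]])
qed

lemma inner2_scale_left: "inner2 (\<lambda>x. c * f x) g = c * inner2 f g"
proof -
  have "(\<lambda>x. c * f x * cnj (g x)) = (\<lambda>x. c * (f x * cnj (g x)))"
    by (simp add: mult.assoc)
  then show ?thesis unfolding inner2_def by simp
qed

lemma inner2_scale_right: "inner2 f (\<lambda>x. c * g x) = cnj c * inner2 f g"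
proof -
  have "(\<lambda>x. f x * cnj (c * g x)) = (\<lambda>x. cnj c * (f x * cnj (g x)))"
    by (simp add: ac_simps)
  then show ?thesis unfolding inner2_def by simp
qed



lemma cs_real:
  fixes A B I :: real
  assumes A: "0 \<le> A" and B: "0 \<le> B" and H: "\<And>t. t > 0 \<Longrightarrow> I \<le> (t*A + B/t)/2"
  shows "I \<le> sqrt A * sqrt B"
proof (cases "A > 0 \<and> B > 0")
  case True
  define t where "t = sqrt B / sqrt A"
  have tp: "t > 0" using True by (simp add: t_def)
  have sA: "sqrt A * sqrt A = A" using A by simp
  have sB: "sqrt B * sqrt B = B" using B by simp
  have "t*A = sqrt A * sqrt B" unfolding t_def using True sA
    by (metis divide_eq_eq mult.commute mult.left_commute real_sqrt_gt_0_iff less_irrefl)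
  moreover have "B/t = sqrt A * sqrt B" unfolding t_def using True sB
    by (simp add: field_simps)
  ultimately show ?thesis using H[OF tp] by simp
next
  case False
  show ?thesis
  proof (rule ccontr)
    assume c: "\<not> I \<le> sqrt A * sqrt B"
    then have Ip: "I > 0" using False A B by auto
    show False
    proof (cases "A = 0")
      case True
      define t where "t = (B+1)/I"
      have tp: "t > 0" using Ip B by (simp add: t_def)
      have "B/t = B*I/(B+1)" using Ip B by (simp add: t_def field_simps)
      also have "\<dots> < I" using Ip B by (simp add: field_simps)
      finally have "B/t < I" .
      then show False using H[OF tp] True Ip by simp
    next
      case False
      then have "B = 0" using \<open>\<not> (A > 0 \<and> B > 0)\<close> A B by auto
      define t where "t = I/(A+1)"
      have tp: "t > 0" using Ip A by (simp add: t_def)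
      have "t*A = I*A/(A+1)" by (simp add: t_def)
      also have "\<dots> < I" using Ip A by (simp add: field_simps)
      finally have "t*A < I" .
      then show False using H[OF tp] \<open>B = 0\<close> Ip by simp
    qed
  qed
qed

lemma amgm_t:
  fixes a b t :: real
  assumes "t > 0"
  shows "a*b \<le> (t*a^2 + b^2/t)/2"
proof -
  have "0 \<le> (t*a-b)^2" by simp
  hence "2*(t*(a*b)) \<le> t^2*a^2 + b^2" by (simp add: power2_diff power_mult_distrib algebra_simps)
  hence "2*(a*b) \<le> (t^2*a^2 + b^2) / t" using assms by (simp add: pos_le_divide_eq algebra_simps)
  moreover have "(t^2*a^2 + b^2) / t = t*a^2 + b^2/t" using assms by (simp add: power2_eq_square field_simps)
  ultimately show ?thesis by simp
qed

lemma cauchy_schwarz: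
  assumes f: "f \<in> L2" and g: "g \<in> L2"
  shows "cmod (inner2 f g) \<le> norm2 f * norm2 g"
proof -
  have i1: "integrable mu (\<lambda>x. cmod (f x) * cmod (g x))"
    using integrable_norm[OF L2_prod_int[OF f g]] by (simp add: norm_mult)
  have "cmod (inner2 f g) \<le> (LINT x|mu. cmod (f x * cnj (g x)))"
    unfolding inner2_def by (rule integral_norm_bound)
  also have "\<dots> = (LINT x|mu. cmod (f x) * cmod (g x))" by (simp add: norm_mult)
  also have "\<dots> \<le> sqrt (LINT x|mu. (cmod (f x))^2) * sqrt (LINT x|mu. (cmod (g x))^2)"
  proof (rule cs_real)
    show "0 \<le> (LINT x|mu. (cmod (f x))^2)" by (rule Bochner_Integration.integral_nonneg) simp
    show "0 \<le> (LINT x|mu. (cmod (g x))^2)" by (rule Bochner_Integration.integral_nonneg) simp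
    fix t :: real assume t: "t > 0"
    have "(LINT x|mu. cmod (f x) * cmod (g x)) \<le> (LINT x|mu. (t*(cmod (f x))^2 + (cmod (g x))^2/t)/2)"
      using i1 L2_int[OF f] L2_int[OF g] amgm_t[OF t]
      by (intro Bochner_Integration.integral_mono) auto
    also have "\<dots> = (t*(LINT x|mu. (cmod (f x))^2) + (LINT x|mu. (cmod (g x))^2)/t)/2"
      using L2_int[OF f] L2_int[OF g] by simp
    finally show "(LINT x|mu. cmod (f x) * cmod (g x)) \<le> (t*(LINT x|mu. (cmod (f x))^2) + (LINT x|mu. (cmod (g x))^2)/t)/2" .
  qed
  also have "\<dots> = norm2 f * norm2 g" by (simp add: norm2_def)
  finally show ?thesis .
qed

lemma shift_prep[simp]: "shift (prep a x) = x"
  by (simp add: shift_def prep_def)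

lemma koopman_L2:
  assumes f: "f \<in> L2"
  shows "koopman f \<in> L2" and "norm2 (koopman f) = norm2 f"
proof -
  have fm[measurable]: "f \<in> borel_measurable mu" using f by (simp add: L2_meas)
  let ?h = "\<lambda>x. (cmod (f x))^2"
  have hi: "integrable mu ?h" using L2_int[OF f] .
  have "(\<integral>\<^sup>+y. ennreal (norm (?h (shift y))) \<partial>mu) =
     (\<integral>\<^sup>+x. ennreal (1/2) * ennreal (norm (?h x)) + ennreal (1/2) * ennreal (norm (?h x)) \<partial>mu)"
    by (subst nn_avg) (auto simp: shift_prep)
  also have "\<dots> = (\<integral>\<^sup>+x. ennreal (norm (?h x)) \<partial>mu)"
  proof (intro nn_integral_cong)
    fix x
    have "ennreal (1/2) * ennreal (norm (?h x)) + ennreal (1/2) * ennreal (norm (?h x)) =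
          (ennreal (1/2) + ennreal (1/2)) * ennreal (norm (?h x))" by (simp add: distrib_right)
    also have "ennreal (1/2) + ennreal (1/2) = ennreal (1/2 + 1/2)" by (rule ennreal_plus[symmetric]) auto
    also have "ennreal (1/2 + 1/2) = 1" by simp
    finally show "ennreal (1/2) * ennreal (norm (?h x)) + ennreal (1/2) * ennreal (norm (?h x)) = ennreal (norm (?h x))" by simp
  qed
  also have "\<dots> < \<infinity>" using hi by (simp add: integrable_iff_bounded)
  finally have "integrable mu (\<lambda>y. ?h (shift y))" by (simp add: integrable_iff_bounded)
  then show K: "koopman f \<in> L2" by (simp add: L2_def koopman_def)
  have "(LINT y|mu. ?h (shift y)) = (1/2) *\<^sub>R (LINT x|mu. ?h x) + (1/2) *\<^sub>R (LINT x|mu. ?h x)"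
    using int_avg[OF \<open>integrable mu (\<lambda>y. ?h (shift y))\<close>] by simp
  also have "\<dots> = (LINT x|mu. ?h x)" by simp
  finally show "norm2 (koopman f) = norm2 f" by (simp add: norm2_def koopman_def)
qed

lemma ruelle_L2:
  assumes f: "f \<in> L2"
  shows "ruelle f \<in> L2"
proof -
  have fm[measurable]: "f \<in> borel_measurable mu" using f by (simp add: L2_meas)
  have m: "ruelle f \<in> borel_measurable mu" unfolding ruelle_def by measurable
  have "integrable mu (\<lambda>x. (cmod (ruelle f x))^2)"
  proof (rule Bochner_Integration.integrable_bound)
    show "integrable mu (\<lambda>x. (cmod (f (prep False x)))^2 + (cmod (f (prep True x)))^2)"
      using int_prep[OF L2_int[OF f]] by simp
    show "(\<lambda>x. (cmod (ruelle f x))^2) \<in> borel_measurable mu" using m by measurable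
    show "AE x in mu. norm ((cmod (ruelle f x))^2) \<le> norm ((cmod (f (prep False x)))^2 + (cmod (f (prep True x)))^2)"
    proof (rule AE_I2)
      fix x
      let ?a = "f (prep False x)" and ?b = "f (prep True x)"
      have "cmod (ruelle f x) = cmod (?a + ?b) / 2" by (simp add: ruelle_def)
      also have "\<dots> \<le> (cmod ?a + cmod ?b)/2" by (intro divide_right_mono norm_triangle_ineq) simp
      finally have "(cmod (ruelle f x))^2 \<le> ((cmod ?a + cmod ?b)/2)^2" by (intro power_mono) simp_all
      also have "\<dots> = (cmod ?a + cmod ?b)^2/4" by (simp add: power_divide)
      also have "\<dots> \<le> (2*(cmod ?a)^2 + 2*(cmod ?b)^2)/4" by (intro divide_right_mono sq2_real) simp
      also have "\<dots> \<le> (cmod ?a)^2 + (cmod ?b)^2" by simp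
      finally show "norm ((cmod (ruelle f x))^2) \<le> norm ((cmod ?a)^2 + (cmod ?b)^2)" by simp
    qed
  qed
  then show ?thesis using m by (simp add: L2_def)
qed

lemma adjoint:
  assumes u: "u \<in> L2" and v: "v \<in> L2"
  shows "inner2 (ruelle u) v = inner2 u (koopman v)"
proof -
  have i: "integrable mu (\<lambda>y. u y * cnj (koopman v y))"
    using L2_prod_int[OF u koopman_L2(1)[OF v]] .
  have i0: "integrable mu (\<lambda>x. u (prep False x) * cnj (v x))"
    using int_prep[OF i, of False] by (simp add: koopman_def)
  have i1: "integrable mu (\<lambda>x. u (prep True x) * cnj (v x))"
    using int_prep[OF i, of True] by (simp add: koopman_def)
  have "inner2 u (koopman v) = (1/2) *\<^sub>R (LINT x|mu. u (prep False x) * cnj (v x)) + (1/2) *\<^sub>R (LINT x|mu. u (prep True x) * cnj (v x))"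
    unfolding inner2_def using int_avg[OF i] by (simp add: koopman_def)
  also have "\<dots> = (LINT x|mu. (1/2) *\<^sub>R (u (prep False x) * cnj (v x)) + (1/2) *\<^sub>R (u (prep True x) * cnj (v x)))"
    using i0 i1 by simp
  also have "\<dots> = inner2 (ruelle u) v"
    unfolding inner2_def ruelle_def
    by (intro Bochner_Integration.integral_cong refl) (simp add: scaleR_conv_of_real field_simps)
  finally show ?thesis by simp
qed



lemma comm_L2:
  assumes AL: "\<forall>f\<in>L2. A f \<in> L2" and f: "f \<in> L2"
  shows "comm ruelle A f \<in> L2" "comm koopman A f \<in> L2"
  unfolding comm_def
  using AL f by (auto intro!: L2_diff ruelle_L2 koopman_L2(1))

lemma key_identity:
  assumes AL: "\<forall>f\<in>L2. A f \<in> L2" and SA: "self_adjoint A" and f: "f \<in> L2" and g: "g \<in> L2"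
  shows "inner2 (comm ruelle A f) g = - inner2 f (comm koopman A g)"
proof -
  have Af: "A f \<in> L2" and Ag: "A g \<in> L2" using AL f g by auto
  have Rf: "ruelle f \<in> L2" using ruelle_L2[OF f] .
  have RAf: "ruelle (A f) \<in> L2" using ruelle_L2[OF Af] .
  have ARf: "A (ruelle f) \<in> L2" using AL Rf by auto
  have Kg: "koopman g \<in> L2" using koopman_L2(1)[OF g] .
  have KAg: "koopman (A g) \<in> L2" using koopman_L2(1)[OF Ag] .
  have AKg: "A (koopman g) \<in> L2" using AL Kg by auto
  have sa: "\<And>u v. u \<in> L2 \<Longrightarrow> v \<in> L2 \<Longrightarrow> inner2 (A u) v = inner2 u (A v)"
    using SA by (simp add: self_adjoint_def)
  have "inner2 (comm ruelle A f) g = inner2 (ruelle (A f)) g - inner2 (A (ruelle f)) g"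
    unfolding comm_def by (rule inner2_diff_left[OF RAf ARf g])
  also have "inner2 (ruelle (A f)) g = inner2 (A f) (koopman g)" by (rule adjoint[OF Af g])
  also have "\<dots> = inner2 f (A (koopman g))" by (rule sa[OF f Kg])
  also have "inner2 (A (ruelle f)) g = inner2 (ruelle f) (A g)" by (rule sa[OF Rf g])
  also have "\<dots> = inner2 f (koopman (A g))" by (rule adjoint[OF f Ag])
  also have "inner2 f (A (koopman g)) - inner2 f (koopman (A g)) = - (inner2 f (koopman (A g)) - inner2 f (A (koopman g)))"
    by simp
  also have "inner2 f (koopman (A g)) - inner2 f (A (koopman g)) = inner2 f (comm koopman A g)"
    unfolding comm_def by (rule inner2_diff_right[OF KAg AKg f, symmetric])
  finally show ?thesis .
qed

lemma dom:
  assumes XL: "\<forall>f\<in>L2. X f \<in> L2" and YL: "\<forall>f\<in>L2. Y f \<in> L2"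
    and idt: "\<forall>f\<in>L2. \<forall>g\<in>L2. inner2 (Y f) g = - inner2 f (X g)" and f: "f \<in> L2"
  shows "\<exists>g\<in>L2. norm2 g \<le> 1 \<and> norm2 (Y f) \<le> norm2 f * norm2 (X g)"
proof (cases "norm2 (Y f) = 0")
  case True
  then show ?thesis using L2_zero norm2_zero norm2_nonneg
    by (metis mult_nonneg_nonneg zero_less_one_class.zero_le_one)
next
  case False
  define n where "n = norm2 (Y f)"
  have np: "n > 0" using False norm2_nonneg[of "Y f"] by (simp add: n_def)
  have Yf: "Y f \<in> L2" using YL f by auto
  define g where "g = (\<lambda>x. complex_of_real (1/n) * Y f x)"
  have gL: "g \<in> L2" unfolding g_def by (rule L2_scale(1)[OF Yf])
  have "norm2 g = cmod (complex_of_real (1/n)) * norm2 (Y f)" unfolding g_def by (rule L2_scale(2)[OF Yf])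
  also have "cmod (complex_of_real (1/n)) = 1/n" using np by (simp only: norm_of_real) simp
  finally have gn: "norm2 g = 1" using np by (simp add: n_def)
  have "inner2 (Y f) g = cnj (complex_of_real (1/n)) * inner2 (Y f) (Y f)"
    unfolding g_def by (rule inner2_scale_right)
  also have "\<dots> = complex_of_real (1/n) * complex_of_real (n^2)"
    by (simp add: inner2_self n_def)
  also have "\<dots> = complex_of_real n" using np by (simp add: power2_eq_square)
  finally have e: "inner2 (Y f) g = complex_of_real n" .
  have "n = cmod (inner2 (Y f) g)" using e np by simp
  also have "\<dots> = cmod (inner2 f (X g))" using idt f gL by simp
  also have "\<dots> \<le> norm2 f * norm2 (X g)" using cauchy_schwarz[OF f] XL gL by simp
  finally have fin: "norm2 (Y f) \<le> norm2 f * norm2 (X g)" by (simp add: n_def)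
  show ?thesis by (rule bexI[of _ g]) (use fin gn gL in auto)
qed

lemma sup_eq_dom:
  fixes S T :: "real set"
  assumes "\<forall>a\<in>S. \<exists>b\<in>T. a \<le> b" and "\<forall>b\<in>T. \<exists>a\<in>S. b \<le> a"
  shows "Sup S = Sup T"
proof -
  have "(\<lambda>z. \<forall>x\<in>S. x \<le> z) = (\<lambda>z. \<forall>x\<in>T. x \<le> z)"
    using assms by (fastforce intro: order_trans)
  then show ?thesis unfolding Sup_real_def by simp
qed

definition opset :: "(fn \<Rightarrow> fn) \<Rightarrow> real set" where
  "opset T = {norm2 (T f) | f. f \<in> L2 \<and> norm2 f \<le> 1}"

lemma opnorm_opset: "opnorm T = Sup (opset T)"
  by (simp add: opnorm_def opset_def)

lemma swap_identity:
  assumes idt: "\<forall>f\<in>L2. \<forall>g\<in>L2. inner2 (Y f) g = - inner2 f (X g)"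
  shows "\<forall>f\<in>L2. \<forall>g\<in>L2. inner2 (X f) g = - inner2 f (Y g)"
proof (intro ballI)
  fix f g assume f: "f \<in> L2" and g: "g \<in> L2"
  have "inner2 (X f) g = cnj (inner2 g (X f))" by (rule inner2_cnj)
  also have "\<dots> = cnj (- inner2 (Y g) f)" using idt f g by simp
  also have "\<dots> = - inner2 f (Y g)" by (simp add: inner2_cnj[of f "Y g"])
  finally show "inner2 (X f) g = - inner2 f (Y g)" .
qed

lemma dom_set:
  assumes XL: "\<forall>f\<in>L2. X f \<in> L2" and YL: "\<forall>f\<in>L2. Y f \<in> L2"
    and idt: "\<forall>f\<in>L2. \<forall>g\<in>L2. inner2 (Y f) g = - inner2 f (X g)"
  shows "\<forall>a\<in>opset Y. \<exists>b\<in>opset X. a \<le> b"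
proof
  fix a assume "a \<in> opset Y"
  then obtain f where f: "f \<in> L2" "norm2 f \<le> 1" and a: "a = norm2 (Y f)" by (auto simp: opset_def)
  obtain g where g: "g \<in> L2" "norm2 g \<le> 1" and le: "norm2 (Y f) \<le> norm2 f * norm2 (X g)"
    using dom[OF XL YL idt f(1)] by blast
  have "norm2 f * norm2 (X g) \<le> norm2 (X g)"
    using f(2) norm2_nonneg[of f] norm2_nonneg[of "X g"] by (simp add: mult_left_le_one_le)
  then have "a \<le> norm2 (X g)" using a le by linarith
  moreover have "norm2 (X g) \<in> opset X" using g by (auto simp: opset_def)
  ultimately show "\<exists>b\<in>opset X. a \<le> b" by blast
qed

lemma opnorm_eq_gen:
  assumes XL: "\<forall>f\<in>L2. X f \<in> L2" and YL: "\<forall>f\<in>L2. Y f \<in> L2"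
    and idt: "\<forall>f\<in>L2. \<forall>g\<in>L2. inner2 (Y f) g = - inner2 f (X g)"
  shows "opnorm Y = opnorm X"
  unfolding opnorm_opset
  by (rule sup_eq_dom[OF dom_set[OF XL YL idt] dom_set[OF YL XL swap_identity[OF idt]]])

lemma bdd_transfer:
  assumes "\<forall>a\<in>S. \<exists>b\<in>T. a \<le> b" and "bdd_above T"
  shows "bdd_above (S :: real set)"
  using assms by (meson bdd_above.I bdd_above.E order_trans)

lemma bound_gen:
  assumes XL: "\<forall>f\<in>L2. X f \<in> L2" and YL: "\<forall>f\<in>L2. Y f \<in> L2"
    and idt: "\<forall>f\<in>L2. \<forall>g\<in>L2. inner2 (Y f) g = - inner2 f (X g)"
    and bdd: "bdd_above (opset X)" and f: "f \<in> L2"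
  shows "norm2 (Y f) \<le> norm2 f * opnorm X"
proof -
  obtain g where g: "g \<in> L2" "norm2 g \<le> 1" and le: "norm2 (Y f) \<le> norm2 f * norm2 (X g)"
    using dom[OF XL YL idt f] by blast
  have "norm2 (X g) \<in> opset X" using g by (auto simp: opset_def)
  then have "norm2 (X g) \<le> opnorm X" unfolding opnorm_opset using bdd by (rule cSup_upper)
  then have "norm2 f * norm2 (X g) \<le> norm2 f * opnorm X"
    using norm2_nonneg[of f] by (rule mult_left_mono)
  then show ?thesis using le by simp
qed



lemma proj_L2: "\<psi> \<in> L2 \<Longrightarrow> \<forall>f\<in>L2. proj \<psi> f \<in> L2"
  unfolding proj_def by (auto intro: L2_scale(1))

lemma proj_norm: "\<psi> \<in> L2 \<Longrightarrow> norm2 (proj \<psi> f) = cmod (inner2 f \<psi>) * norm2 \<psi>"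
  unfolding proj_def by (rule L2_scale(2))

lemma proj_sa: "self_adjoint (proj \<psi>)"
  unfolding self_adjoint_def
proof (intro ballI)
  fix f g
  have "inner2 (proj \<psi> f) g = inner2 f \<psi> * inner2 \<psi> g"
    unfolding proj_def by (rule inner2_scale_left)
  moreover have "inner2 f (proj \<psi> g) = cnj (inner2 g \<psi>) * inner2 f \<psi>"
    unfolding proj_def by (rule inner2_scale_right)
  moreover have "cnj (inner2 g \<psi>) = inner2 \<psi> g" using inner2_cnj[of \<psi> g] by simp
  ultimately show "inner2 (proj \<psi> f) g = inner2 f (proj \<psi> g)" by (simp add: mult.commute)
qed

lemma proj_bdd:
  assumes psi: "\<psi> \<in> L2" and n1: "norm2 \<psi> = 1"
  shows "bdd_above (opset (comm koopman (proj \<psi>)))"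
proof (rule bdd_aboveI[where M=2])
  fix x assume "x \<in> opset (comm koopman (proj \<psi>))"
  then obtain g where g: "g \<in> L2" "norm2 g \<le> 1" and x: "x = norm2 (comm koopman (proj \<psi>) g)"
    by (auto simp: opset_def)
  let ?P = "proj \<psi>"
  have Pg: "?P g \<in> L2" using proj_L2[OF psi] g by auto
  have Kg: "koopman g \<in> L2" using koopman_L2(1)[OF g(1)] .
  have KPg: "koopman (?P g) \<in> L2" using koopman_L2(1)[OF Pg] .
  have PKg: "?P (koopman g) \<in> L2" using proj_L2[OF psi] Kg by auto
  have a: "norm2 (koopman (?P g)) \<le> 1"
  proof -
    have "norm2 (koopman (?P g)) = norm2 (?P g)" by (rule koopman_L2(2)[OF Pg])
    also have "\<dots> = cmod (inner2 g \<psi>)" using proj_norm[OF psi] n1 by simp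
    also have "\<dots> \<le> norm2 g * norm2 \<psi>" by (rule cauchy_schwarz[OF g(1) psi])
    also have "\<dots> \<le> 1" using g(2) n1 by simp
    finally show ?thesis .
  qed
  have b: "norm2 (?P (koopman g)) \<le> 1"
  proof -
    have "norm2 (?P (koopman g)) = cmod (inner2 (koopman g) \<psi>)" using proj_norm[OF psi] n1 by simp
    also have "\<dots> \<le> norm2 (koopman g) * norm2 \<psi>" by (rule cauchy_schwarz[OF Kg psi])
    also have "\<dots> \<le> 1" using g(2) n1 koopman_L2(2)[OF g(1)] by simp
    finally show ?thesis .
  qed
  have "x^2 \<le> 2 * (norm2 (koopman (?P g)))^2 + 2 * (norm2 (?P (koopman g)))^2"
    unfolding x comm_def by (rule norm2_diff_sq[OF KPg PKg])
  also have "\<dots> \<le> 2 * 1 + 2 * 1"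
    using a b norm2_nonneg[of "koopman (?P g)"] norm2_nonneg[of "?P (koopman g)"]
    by (intro add_mono mult_left_mono power_le_one) auto
  also have "\<dots> = 2^2" by simp
  finally have "x^2 \<le> 2^2" .
  then show "x \<le> 2" by (rule power2_le_imp_le) simp
qed

lemma commH_eq: "commH dirac (piop A) p = (comm koopman A (snd p), comm ruelle A (fst p))"
  by (simp add: commH_def dirac_def piop_def comm_def)

lemma normH_pair: "normH (a, b) = sqrt ((norm2 a)^2 + (norm2 b)^2)"
  by (simp add: normH_def)

lemma opnormH_gen:
  assumes AL: "\<forall>f\<in>L2. A f \<in> L2" and SA: "self_adjoint A"
    and bdd: "bdd_above (opset (comm koopman A))"
  shows "opnormH (commH dirac (piop A)) = opnorm (comm koopman A)"
proof -
  let ?X = "comm koopman A" and ?Y = "comm ruelle A"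
  have XL: "\<forall>f\<in>L2. ?X f \<in> L2" using comm_L2(2)[OF AL] by auto
  have YL: "\<forall>f\<in>L2. ?Y f \<in> L2" using comm_L2(1)[OF AL] by auto
  have idt: "\<forall>f\<in>L2. \<forall>g\<in>L2. inner2 (?Y f) g = - inner2 f (?X g)"
    using key_identity[OF AL SA] by auto
  define N where "N = opnorm ?X"
  have NY: "opnorm ?Y = N" unfolding N_def by (rule opnorm_eq_gen[OF XL YL idt])
  have bddY: "bdd_above (opset ?Y)" by (rule bdd_transfer[OF dom_set[OF XL YL idt] bdd])
  have bX: "\<And>q. q \<in> L2 \<Longrightarrow> norm2 (?X q) \<le> norm2 q * N"
    using bound_gen[OF YL XL swap_identity[OF idt] bddY] NY by simp
  have bY: "\<And>q. q \<in> L2 \<Longrightarrow> norm2 (?Y q) \<le> norm2 q * N"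
    using bound_gen[OF XL YL idt bdd] by (simp add: N_def)
  have z0: "norm2 (?X (\<lambda>x. 0)) \<in> opset ?X" using L2_zero norm2_zero by (force simp: opset_def)
  have N0: "N \<ge> 0"
  proof -
    have "norm2 (?X (\<lambda>x. 0)) \<le> N" unfolding N_def opnorm_opset by (rule cSup_upper[OF z0 bdd])
    then show ?thesis using norm2_nonneg[of "?X (\<lambda>x. 0)"] by linarith
  qed
  define H where "H = {normH (commH dirac (piop A) p) | p. fst p \<in> L2 \<and> snd p \<in> L2 \<and> normH p \<le> 1}"
  have Hle: "\<forall>e\<in>H. e \<le> N"
  proof
    fix e assume "e \<in> H"
    then obtain p where p: "fst p \<in> L2" "snd p \<in> L2" "normH p \<le> 1"
      and e: "e = normH (commH dirac (piop A) p)" by (auto simp: H_def)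
    obtain p1 q where pp: "p = (p1, q)" by (cases p)
    have p1: "p1 \<in> L2" and q: "q \<in> L2" using p pp by auto
    have s1: "(norm2 p1)^2 + (norm2 q)^2 \<le> 1" using p(3) pp by (simp add: normH_def)
    have e2: "e = sqrt ((norm2 (?X q))^2 + (norm2 (?Y p1))^2)"
      using e pp by (simp add: commH_eq normH_pair)
    have x2: "(norm2 (?X q))^2 \<le> (norm2 q * N)^2"
      using bX[OF q] norm2_nonneg[of "?X q"] by (intro power_mono) auto
    have y2: "(norm2 (?Y p1))^2 \<le> (norm2 p1 * N)^2"
      using bY[OF p1] norm2_nonneg[of "?Y p1"] by (intro power_mono) auto
    have "(norm2 (?X q))^2 + (norm2 (?Y p1))^2 \<le> N^2 * ((norm2 p1)^2 + (norm2 q)^2)"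
      using x2 y2 by (simp add: power_mult_distrib algebra_simps)
    also have "\<dots> \<le> N^2 * 1" using s1 by (intro mult_left_mono) auto
    finally have "(norm2 (?X q))^2 + (norm2 (?Y p1))^2 \<le> N^2" by simp
    then have "e \<le> sqrt (N^2)" unfolding e2 by (rule real_sqrt_le_mono)
    then show "e \<le> N" using N0 by simp
  qed
  have Hne: "H \<noteq> {}"
  proof -
    have "normH (commH dirac (piop A) ((\<lambda>x. 0), (\<lambda>x. 0))) \<in> H"
      unfolding H_def using L2_zero by (force simp: normH_def norm2_zero)
    then show ?thesis by auto
  qed
  have bddH: "bdd_above H" using Hle by (auto intro: bdd_aboveI)
  have up: "Sup H \<le> N" using Hne Hle by (intro cSup_least) auto
  have lo: "Sup (opset ?X) \<le> Sup H"
  proof (rule cSup_mono)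
    show "opset ?X \<noteq> {}" using z0 by auto
    show "bdd_above H" by (rule bddH)
    fix b assume "b \<in> opset ?X"
    then obtain f where f: "f \<in> L2" "norm2 f \<le> 1" and b: "b = norm2 (?X f)" by (auto simp: opset_def)
    let ?p = "((\<lambda>x. 0), f) :: fn \<times> fn"
    have nf: "normH ?p = norm2 f" using norm2_nonneg[of f] by (simp add: normH_def norm2_zero)
    have mem: "normH (commH dirac (piop A) ?p) \<in> H"
      unfolding H_def using f L2_zero nf by force
    have "b = sqrt ((norm2 (?X f))^2)" using b norm2_nonneg[of "?X f"] by simp
    also have "\<dots> \<le> sqrt ((norm2 (?X f))^2 + (norm2 (?Y (\<lambda>x. 0)))^2)"
      by (intro real_sqrt_le_mono) simp
    also have "\<dots> = normH (commH dirac (piop A) ?p)" by (simp add: commH_eq normH_pair)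
    finally show "\<exists>a\<in>H. b \<le> a" using mem by blast
  qed
  have "opnormH (commH dirac (piop A)) = Sup H" by (simp add: opnormH_def H_def)
  also have "\<dots> = N" using up lo unfolding N_def opnorm_opset by simp
  finally show ?thesis by (simp add: N_def)
qed

theorem lemma2p1:
  shows "(\<forall>A. bounded_op A \<and> self_adjoint A \<longrightarrow>
            opnorm (comm ruelle A) = opnorm (comm koopman A)) \<and>
         (\<forall>\<psi>\<in>L2. norm2 \<psi> = 1 \<longrightarrow>
            opnorm (comm ruelle (proj \<psi>)) = opnorm (comm koopman (proj \<psi>)) \<and>
            opnormH (commH dirac (piop (proj \<psi>))) =
              max (opnorm (comm koopman (proj \<psi>))) (opnorm (comm ruelle (proj \<psi>))) \<and>
            max (opnorm (comm koopman (proj \<psi>))) (opnorm (comm ruelle (proj \<psi>))) =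
              opnorm (comm koopman (proj \<psi>)))"
proof -
  have gen: "opnorm (comm ruelle A) = opnorm (comm koopman A)"
    if AL: "\<forall>f\<in>L2. A f \<in> L2" and SA: "self_adjoint A" for A
  proof (rule opnorm_eq_gen)
    show "\<forall>f\<in>L2. comm koopman A f \<in> L2" using comm_L2(2)[OF AL] by auto
    show "\<forall>f\<in>L2. comm ruelle A f \<in> L2" using comm_L2(1)[OF AL] by auto
    show "\<forall>f\<in>L2. \<forall>g\<in>L2. inner2 (comm ruelle A f) g = - inner2 f (comm koopman A g)"
      using key_identity[OF AL SA] by auto
  qed
  have part1: "\<forall>A. bounded_op A \<and> self_adjoint A \<longrightarrow>
            opnorm (comm ruelle A) = opnorm (comm koopman A)"
    using gen by (auto simp: bounded_op_def)
  have part2: "opnorm (comm ruelle (proj \<psi>)) = opnorm (comm koopman (proj \<psi>)) \<and>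
            opnormH (commH dirac (piop (proj \<psi>))) =
              max (opnorm (comm koopman (proj \<psi>))) (opnorm (comm ruelle (proj \<psi>))) \<and>
            max (opnorm (comm koopman (proj \<psi>))) (opnorm (comm ruelle (proj \<psi>))) =
              opnorm (comm koopman (proj \<psi>))"
    if psi: "\<psi> \<in> L2" and n1: "norm2 \<psi> = 1" for \<psi>
  proof -
    have AL: "\<forall>f\<in>L2. proj \<psi> f \<in> L2" by (rule proj_L2[OF psi])
    have e: "opnorm (comm ruelle (proj \<psi>)) = opnorm (comm koopman (proj \<psi>))"
      by (rule gen[OF AL proj_sa])
    have h: "opnormH (commH dirac (piop (proj \<psi>))) = opnorm (comm koopman (proj \<psi>))"
      by (rule opnormH_gen[OF AL proj_sa proj_bdd[OF psi n1]])
    show ?thesis using e h by simp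
  qed
  show ?thesis using part1 part2 by blast
qed

end
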